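(* If $\{a_n\}_{n\ge0}$ is a pm sequence, then for every $n\ge0$ the polynomial $\sum_{j=0}^{2n} a_j x^{j}/j!$ takes only nonnegative values for all $x\in\mathbb{R}$.
   Context: A sequence of reals $\{m_n\}_{n\ge0}$ is called a pm (positive moment) sequence if there is a positive Borel measure $\mu$ on $\mathbb{R}$ with finite moments of all orders such that $m_n=\int x^n\,\mu(dx)$ for all $n\ge0$. *)

theory Defs
  imports "HOL-Probability.Probability"
begin

definition pm_sequence :: "(nat \<Rightarrow> real) \<Rightarrow> bool" where
  "pm_sequence m \<longleftrightarrow>
     (\<exists>\<mu> :: real measure. sets \<mu> = sets borel \<and>
        (\<forall>n. integrable \<mu> (\<lambda>x. x ^ n)) \<and>
        (\<forall>n. m n = (\<integral>x. x ^ n \<partial>\<mu>)))"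

end

theory Submission
  imports Defs
begin

lemma texp_nonneg:
  fixes y :: real
  shows "0 \<le> (\<Sum>j = 0..2 * n. y ^ j / fact j)"
proof (cases "y \<ge> 0")
  case True
  then show ?thesis by (intro sum_nonneg) auto
next
  case False
  obtain t where t: "exp y = (\<Sum>m<Suc (2*n). (y ^ m) / fact m) + (exp t / fact (Suc (2*n))) * y ^ (Suc (2*n))"
    using Maclaurin_exp_le [of y "Suc (2*n)"] by blast
  have "y ^ (Suc (2*n)) \<le> 0" using False
    by (simp add: power_mult mult_nonpos_nonneg)
  hence "(exp t / fact (Suc (2*n))) * y ^ (Suc (2*n)) \<le> 0"
    by (intro mult_nonneg_nonpos divide_nonneg_nonneg) auto
  moreover have "{..<Suc (2*n)} = {0..2*n}" by auto
  ultimately have "exp y \<le> (\<Sum>j = 0..2 * n. y ^ j / fact j)" using t by auto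
  moreover have "0 < exp y" by simp
  ultimately show ?thesis by linarith
qed

theorem corollary1:
  fixes a :: "nat \<Rightarrow> real"
  assumes "pm_sequence a"
  shows "\<forall>n::nat. \<forall>x::real. 0 \<le> (\<Sum>j = 0..2 * n. a j * x ^ j / fact j)"
proof (intro allI)
  fix n :: nat and x :: real
  obtain \<mu> :: "real measure" where int: "\<And>n. integrable \<mu> (\<lambda>t. t ^ n)"
    and mom: "\<And>n. a n = (\<integral>t. t ^ n \<partial>\<mu>)"
    using assms unfolding pm_sequence_def by blast
  have "(\<Sum>j = 0..2 * n. a j * x ^ j / fact j)
      = (\<Sum>j = 0..2 * n. (\<integral>t. t ^ j * (x ^ j / fact j) \<partial>\<mu>))"
    by (simp add: mom)
  also have "\<dots> = (\<integral>t. (\<Sum>j = 0..2 * n. t ^ j * (x ^ j / fact j)) \<partial>\<mu>)"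
    using integral_sum[where I="{0..2*n}" and f="\<lambda>j t. t^j * (x^j/fact j)"] int by simp
  also have "\<dots> = (\<integral>t. (\<Sum>j = 0..2 * n. (x * t) ^ j / fact j) \<partial>\<mu>)"
    by (simp add: power_mult_distrib mult.commute)
  also have "\<dots> \<ge> 0"
    by (intro integral_nonneg_AE) (simp add: texp_nonneg)
  finally show "0 \<le> (\<Sum>j = 0..2 * n. a j * x ^ j / fact j)" .
qed

end
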